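(* Let $\mathcal{C}$ be an abelian category and $\mathcal{A}$ the abelian category whose objects are complexes $[A\xrightarrow{f}B\xrightarrow{g}C]$ in $\mathcal{C}$ (degrees $-2,-1,0$) with $f$ injective and $\operatorname{Ker} g=\operatorname{Im} f$, morphisms being chain maps modulo homotopy. If $[D\to I\to J]$ is an object of $\mathcal{A}$ with $I$ and $J$ injective objects of $\mathcal{C}$, then $[D\to I\to J]$ is an injective object of $\mathcal{A}$.
   Context: $\mathcal{A}$ is the heart of the $t$-structure on $K^b(\mathcal{C})$ with $D^{\leq 0}=\{X: X^i=0,\ i>0\}$ and $D^{\geq 0}=\{X: X^i=0,\ i<-2,\ H^{-2}(X)=H^{-1}(X)=0\}$. *)

theory Defs
  imports Main
begin

text \<open>A (small-or-large) preadditive category presented by its data: a set of objects,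
  a set of arrows, domain/codomain, composition (Cmp g f = g o f), identities and the
  abelian-group structure on each hom-set.\<close>

record ('o, 'm) addcat =
  Ob   :: "'o set"
  Ar   :: "'m set"
  Dom  :: "'m \<Rightarrow> 'o"
  Cod  :: "'m \<Rightarrow> 'o"
  Cmp  :: "'m \<Rightarrow> 'm \<Rightarrow> 'm"
  Idm  :: "'o \<Rightarrow> 'm"
  Add  :: "'m \<Rightarrow> 'm \<Rightarrow> 'm"
  Neg  :: "'m \<Rightarrow> 'm"
  Zer  :: "'o \<Rightarrow> 'o \<Rightarrow> 'm"

definition hom :: "('o,'m) addcat \<Rightarrow> 'o \<Rightarrow> 'o \<Rightarrow> 'm set" where
  "hom C X Y = {f \<in> Ar C. Dom C f = X \<and> Cod C f = Y}"

definition is_category :: "('o,'m) addcat \<Rightarrow> bool" where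
  "is_category C \<longleftrightarrow>
     (\<forall>f \<in> Ar C. Dom C f \<in> Ob C \<and> Cod C f \<in> Ob C) \<and>
     (\<forall>X \<in> Ob C. Idm C X \<in> hom C X X) \<and>
     (\<forall>X Y Z f g. f \<in> hom C X Y \<longrightarrow> g \<in> hom C Y Z \<longrightarrow> Cmp C g f \<in> hom C X Z) \<and>
     (\<forall>W X Y Z f g h. f \<in> hom C W X \<longrightarrow> g \<in> hom C X Y \<longrightarrow> h \<in> hom C Y Z \<longrightarrow>
         Cmp C h (Cmp C g f) = Cmp C (Cmp C h g) f) \<and>
     (\<forall>X Y f. f \<in> hom C X Y \<longrightarrow> Cmp C (Idm C Y) f = f \<and> Cmp C f (Idm C X) = f)"

definition is_preadditive :: "('o,'m) addcat \<Rightarrow> bool" where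
  "is_preadditive C \<longleftrightarrow> is_category C \<and>
     (\<forall>X \<in> Ob C. \<forall>Y \<in> Ob C.
        Zer C X Y \<in> hom C X Y \<and>
        (\<forall>f \<in> hom C X Y. \<forall>g \<in> hom C X Y. Add C f g \<in> hom C X Y) \<and>
        (\<forall>f \<in> hom C X Y. Neg C f \<in> hom C X Y) \<and>
        (\<forall>f \<in> hom C X Y. \<forall>g \<in> hom C X Y. \<forall>h \<in> hom C X Y.
            Add C (Add C f g) h = Add C f (Add C g h)) \<and>
        (\<forall>f \<in> hom C X Y. \<forall>g \<in> hom C X Y. Add C f g = Add C g f) \<and>
        (\<forall>f \<in> hom C X Y. Add C f (Zer C X Y) = f) \<and>
        (\<forall>f \<in> hom C X Y. Add C f (Neg C f) = Zer C X Y)) \<and>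
     (\<forall>X Y Z f g h. f \<in> hom C X Y \<longrightarrow> g \<in> hom C X Y \<longrightarrow> h \<in> hom C Y Z \<longrightarrow>
         Cmp C h (Add C f g) = Add C (Cmp C h f) (Cmp C h g)) \<and>
     (\<forall>X Y Z f g h. h \<in> hom C X Y \<longrightarrow> f \<in> hom C Y Z \<longrightarrow> g \<in> hom C Y Z \<longrightarrow>
         Cmp C (Add C f g) h = Add C (Cmp C f h) (Cmp C g h))"

definition is_mono :: "('o,'m) addcat \<Rightarrow> 'm \<Rightarrow> bool" where
  "is_mono C f \<longleftrightarrow> f \<in> Ar C \<and>
     (\<forall>W \<in> Ob C. \<forall>u \<in> hom C W (Dom C f). \<forall>v \<in> hom C W (Dom C f).
        Cmp C f u = Cmp C f v \<longrightarrow> u = v)"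

definition is_epi :: "('o,'m) addcat \<Rightarrow> 'm \<Rightarrow> bool" where
  "is_epi C f \<longleftrightarrow> f \<in> Ar C \<and>
     (\<forall>W \<in> Ob C. \<forall>u \<in> hom C (Cod C f) W. \<forall>v \<in> hom C (Cod C f) W.
        Cmp C u f = Cmp C v f \<longrightarrow> u = v)"

definition is_kernel :: "('o,'m) addcat \<Rightarrow> 'm \<Rightarrow> 'm \<Rightarrow> bool" where
  "is_kernel C g k \<longleftrightarrow> g \<in> Ar C \<and> k \<in> hom C (Dom C k) (Dom C g) \<and>
     Cmp C g k = Zer C (Dom C k) (Cod C g) \<and>
     (\<forall>W \<in> Ob C. \<forall>h \<in> hom C W (Dom C g). Cmp C g h = Zer C W (Cod C g) \<longrightarrow>
        (\<exists>!u. u \<in> hom C W (Dom C k) \<and> Cmp C k u = h))"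

definition is_cokernel :: "('o,'m) addcat \<Rightarrow> 'm \<Rightarrow> 'm \<Rightarrow> bool" where
  "is_cokernel C g c \<longleftrightarrow> g \<in> Ar C \<and> c \<in> hom C (Cod C g) (Cod C c) \<and>
     Cmp C c g = Zer C (Dom C g) (Cod C c) \<and>
     (\<forall>W \<in> Ob C. \<forall>h \<in> hom C (Cod C g) W. Cmp C h g = Zer C (Dom C g) W \<longrightarrow>
        (\<exists>!u. u \<in> hom C (Cod C c) W \<and> Cmp C u c = h))"

definition is_abelian :: "('o,'m) addcat \<Rightarrow> bool" where
  "is_abelian C \<longleftrightarrow> is_preadditive C \<and>
     \<comment> \<open>zero object\<close>
     (\<exists>Z \<in> Ob C. \<forall>X \<in> Ob C. hom C Z X = {Zer C Z X} \<and> hom C X Z = {Zer C X Z}) \<and>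
     \<comment> \<open>binary biproducts\<close>
     (\<forall>X \<in> Ob C. \<forall>Y \<in> Ob C. \<exists>P \<in> Ob C. \<exists>i1 i2 p1 p2.
        i1 \<in> hom C X P \<and> i2 \<in> hom C Y P \<and> p1 \<in> hom C P X \<and> p2 \<in> hom C P Y \<and>
        Cmp C p1 i1 = Idm C X \<and> Cmp C p2 i2 = Idm C Y \<and>
        Cmp C p1 i2 = Zer C Y X \<and> Cmp C p2 i1 = Zer C X Y \<and>
        Add C (Cmp C i1 p1) (Cmp C i2 p2) = Idm C P) \<and>
     \<comment> \<open>kernels and cokernels exist\<close>
     (\<forall>g \<in> Ar C. \<exists>k. is_kernel C g k) \<and>
     (\<forall>g \<in> Ar C. \<exists>c. is_cokernel C g c) \<and>
     \<comment> \<open>every mono is a kernel, every epi is a cokernel\<close>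
     (\<forall>m. is_mono C m \<longrightarrow> (\<exists>g \<in> Ar C. is_kernel C g m)) \<and>
     (\<forall>e. is_epi C e \<longrightarrow> (\<exists>g \<in> Ar C. is_cokernel C g e))"

definition injective_obj :: "('o,'m) addcat \<Rightarrow> 'o \<Rightarrow> bool" where
  "injective_obj C I \<longleftrightarrow> I \<in> Ob C \<and>
     (\<forall>X \<in> Ob C. \<forall>Y \<in> Ob C. \<forall>m \<in> hom C X Y. \<forall>a \<in> hom C X I.
        is_mono C m \<longrightarrow> (\<exists>b \<in> hom C Y I. Cmp C b m = a))"

text \<open>An object of A: (A, B, C, f, g) with f : A \<rightarrow> B, g : B \<rightarrow> C, g f = 0, f mono and
  Ker g = Im f; since f is mono, Im f is f itself, so Ker g = Im f means f is a kernel of g.\<close>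
type_synonym ('o,'m) cx = "'o \<times> 'o \<times> 'o \<times> 'm \<times> 'm"

definition cxA :: "('o,'m) addcat \<Rightarrow> ('o,'m) cx \<Rightarrow> bool" where
  "cxA C X \<longleftrightarrow> (case X of (A, B, Cc, f, g) \<Rightarrow>
     A \<in> Ob C \<and> B \<in> Ob C \<and> Cc \<in> Ob C \<and> f \<in> hom C A B \<and> g \<in> hom C B Cc \<and>
     Cmp C g f = Zer C A Cc \<and> is_mono C f \<and> is_kernel C g f)"

definition chain_map :: "('o,'m) addcat \<Rightarrow> ('o,'m) cx \<Rightarrow> ('o,'m) cx \<Rightarrow> 'm \<times> 'm \<times> 'm \<Rightarrow> bool" where
  "chain_map C X X' \<phi> \<longleftrightarrow> (case X of (A, B, Cc, f, g) \<Rightarrow> case X' of (A', B', Cc', f', g') \<Rightarrow>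
     case \<phi> of (a, b, c) \<Rightarrow>
     a \<in> hom C A A' \<and> b \<in> hom C B B' \<and> c \<in> hom C Cc Cc' \<and>
     Cmp C b f = Cmp C f' a \<and> Cmp C c g = Cmp C g' b)"

text \<open>Chain homotopy: homotopy maps s : B \<rightarrow> A', t : C \<rightarrow> B' (the other components
  involve zero objects) with \<phi> - \<psi> = d s + s d in each degree.\<close>
definition homotopic :: "('o,'m) addcat \<Rightarrow> ('o,'m) cx \<Rightarrow> ('o,'m) cx \<Rightarrow>
    'm \<times> 'm \<times> 'm \<Rightarrow> 'm \<times> 'm \<times> 'm \<Rightarrow> bool" where
  "homotopic C X X' \<phi> \<psi> \<longleftrightarrow> chain_map C X X' \<phi> \<and> chain_map C X X' \<psi> \<and>
    (case X of (A, B, Cc, f, g) \<Rightarrow> case X' of (A', B', Cc', f', g') \<Rightarrow>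
     case \<phi> of (a, b, c) \<Rightarrow> case \<psi> of (a', b', c') \<Rightarrow>
     (\<exists>s t. s \<in> hom C B A' \<and> t \<in> hom C Cc B' \<and>
        Add C a (Neg C a') = Cmp C s f \<and>
        Add C b (Neg C b') = Add C (Cmp C f' s) (Cmp C t g) \<and>
        Add C c (Neg C c') = Cmp C g' t))"

definition cmp3 :: "('o,'m) addcat \<Rightarrow> 'm \<times> 'm \<times> 'm \<Rightarrow> 'm \<times> 'm \<times> 'm \<Rightarrow> 'm \<times> 'm \<times> 'm" where
  "cmp3 C \<psi> \<phi> = (case \<psi> of (a', b', c') \<Rightarrow> case \<phi> of (a, b, c) \<Rightarrow>
     (Cmp C a' a, Cmp C b' b, Cmp C c' c))"

text \<open>A morphism of A (homotopy class represented by chain map u : X \<rightarrow> Y) is a monomorphism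
  in A.\<close>
definition mono_A :: "('o,'m) addcat \<Rightarrow> ('o,'m) cx \<Rightarrow> ('o,'m) cx \<Rightarrow> 'm \<times> 'm \<times> 'm \<Rightarrow> bool" where
  "mono_A C X Y u \<longleftrightarrow> chain_map C X Y u \<and>
     (\<forall>Z v w. cxA C Z \<longrightarrow> chain_map C Z X v \<longrightarrow> chain_map C Z X w \<longrightarrow>
        homotopic C Z Y (cmp3 C u v) (cmp3 C u w) \<longrightarrow> homotopic C Z X v w)"

definition injective_A :: "('o,'m) addcat \<Rightarrow> ('o,'m) cx \<Rightarrow> bool" where
  "injective_A C E \<longleftrightarrow> cxA C E \<and>
     (\<forall>X Y u \<phi>. cxA C X \<longrightarrow> cxA C Y \<longrightarrow> mono_A C X Y u \<longrightarrow> chain_map C X E \<phi> \<longrightarrow>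
        (\<exists>\<psi>. chain_map C Y E \<psi> \<and> homotopic C X E (cmp3 C \<psi> u) \<phi>))"

end

theory Submission
  imports Defs
begin


locale pa = fixes C :: "('o,'m) addcat" assumes pa: "is_preadditive C"
begin

lemma cat: "is_category C" using pa unfolding is_preadditive_def by blast

lemma homD: "f \<in> hom C X Y \<Longrightarrow> f \<in> Ar C \<and> Dom C f = X \<and> Cod C f = Y"
  by (simp add: hom_def)

lemma hom_ob: "f \<in> hom C X Y \<Longrightarrow> X \<in> Ob C \<and> Y \<in> Ob C"
  using cat unfolding is_category_def hom_def by blast

lemma ar_hom: "f \<in> Ar C \<Longrightarrow> f \<in> hom C (Dom C f) (Cod C f)"
  by (simp add: hom_def)

lemma ar_ob: "f \<in> Ar C \<Longrightarrow> Dom C f \<in> Ob C \<and> Cod C f \<in> Ob C"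
  using cat unfolding is_category_def by blast

lemma comp_hom[intro]: "f \<in> hom C X Y \<Longrightarrow> g \<in> hom C Y Z \<Longrightarrow> Cmp C g f \<in> hom C X Z"
  using cat unfolding is_category_def by blast

lemma assoc: "f \<in> hom C W X \<Longrightarrow> g \<in> hom C X Y \<Longrightarrow> h \<in> hom C Y Z \<Longrightarrow>
         Cmp C h (Cmp C g f) = Cmp C (Cmp C h g) f"
  using cat unfolding is_category_def by blast

lemma id_hom[intro]: "X \<in> Ob C \<Longrightarrow> Idm C X \<in> hom C X X"
  using cat unfolding is_category_def by blast

lemma id_l: "f \<in> hom C X Y \<Longrightarrow> Cmp C (Idm C Y) f = f"
  using cat unfolding is_category_def by blast
lemma id_r: "f \<in> hom C X Y \<Longrightarrow> Cmp C f (Idm C X) = f"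
  using cat unfolding is_category_def by blast

lemma paXY: assumes "X \<in> Ob C" "Y \<in> Ob C" shows
        "Zer C X Y \<in> hom C X Y \<and>
        (\<forall>f \<in> hom C X Y. \<forall>g \<in> hom C X Y. Add C f g \<in> hom C X Y) \<and>
        (\<forall>f \<in> hom C X Y. Neg C f \<in> hom C X Y) \<and>
        (\<forall>f \<in> hom C X Y. \<forall>g \<in> hom C X Y. \<forall>h \<in> hom C X Y.
            Add C (Add C f g) h = Add C f (Add C g h)) \<and>
        (\<forall>f \<in> hom C X Y. \<forall>g \<in> hom C X Y. Add C f g = Add C g f) \<and>
        (\<forall>f \<in> hom C X Y. Add C f (Zer C X Y) = f) \<and>
        (\<forall>f \<in> hom C X Y. Add C f (Neg C f) = Zer C X Y)"
proof -
  have "\<forall>X \<in> Ob C. \<forall>Y \<in> Ob C.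
        Zer C X Y \<in> hom C X Y \<and>
        (\<forall>f \<in> hom C X Y. \<forall>g \<in> hom C X Y. Add C f g \<in> hom C X Y) \<and>
        (\<forall>f \<in> hom C X Y. Neg C f \<in> hom C X Y) \<and>
        (\<forall>f \<in> hom C X Y. \<forall>g \<in> hom C X Y. \<forall>h \<in> hom C X Y.
            Add C (Add C f g) h = Add C f (Add C g h)) \<and>
        (\<forall>f \<in> hom C X Y. \<forall>g \<in> hom C X Y. Add C f g = Add C g f) \<and>
        (\<forall>f \<in> hom C X Y. Add C f (Zer C X Y) = f) \<and>
        (\<forall>f \<in> hom C X Y. Add C f (Neg C f) = Zer C X Y)"
    using pa unfolding is_preadditive_def by (elim conjE)
  thus ?thesis using assms by (elim ballE) auto
qed

lemma zero_hom[intro]: "X \<in> Ob C \<Longrightarrow> Y \<in> Ob C \<Longrightarrow> Zer C X Y \<in> hom C X Y"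
  using paXY by blast

lemma add_hom[intro]: "f \<in> hom C X Y \<Longrightarrow> g \<in> hom C X Y \<Longrightarrow> Add C f g \<in> hom C X Y"
proof -
  assume a: "f \<in> hom C X Y" "g \<in> hom C X Y"
  have "X \<in> Ob C" "Y \<in> Ob C" using hom_ob[OF a(1)] by auto
  from paXY[OF this] a show ?thesis by blast
qed

lemma neg_hom[intro]: "f \<in> hom C X Y \<Longrightarrow> Neg C f \<in> hom C X Y"
proof -
  assume a: "f \<in> hom C X Y"
  have "X \<in> Ob C" "Y \<in> Ob C" using hom_ob[OF a(1)] by auto
  from paXY[OF this] a show ?thesis by blast
qed

lemma add_assoc: "f \<in> hom C X Y \<Longrightarrow> g \<in> hom C X Y \<Longrightarrow> h \<in> hom C X Y \<Longrightarrow>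
   Add C (Add C f g) h = Add C f (Add C g h)"
proof -
  assume a: "f \<in> hom C X Y" "g \<in> hom C X Y" "h \<in> hom C X Y"
  have "X \<in> Ob C" "Y \<in> Ob C" using hom_ob[OF a(1)] by auto
  from paXY[OF this] a show ?thesis by blast
qed

lemma add_comm: "f \<in> hom C X Y \<Longrightarrow> g \<in> hom C X Y \<Longrightarrow> Add C f g = Add C g f"
proof -
  assume a: "f \<in> hom C X Y" "g \<in> hom C X Y"
  have "X \<in> Ob C" "Y \<in> Ob C" using hom_ob[OF a(1)] by auto
  from paXY[OF this] a show ?thesis by blast
qed

lemma add_zero: "f \<in> hom C X Y \<Longrightarrow> Add C f (Zer C X Y) = f"
proof -
  assume a: "f \<in> hom C X Y"
  have "X \<in> Ob C" "Y \<in> Ob C" using hom_ob[OF a(1)] by auto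
  from paXY[OF this] a show ?thesis by blast
qed

lemma add_neg: "f \<in> hom C X Y \<Longrightarrow> Add C f (Neg C f) = Zer C X Y"
proof -
  assume a: "f \<in> hom C X Y"
  have "X \<in> Ob C" "Y \<in> Ob C" using hom_ob[OF a(1)] by auto
  from paXY[OF this] a show ?thesis by blast
qed

lemma pa_dist: "(\<forall>X Y Z f g h. f \<in> hom C X Y \<longrightarrow> g \<in> hom C X Y \<longrightarrow> h \<in> hom C Y Z \<longrightarrow>
         Cmp C h (Add C f g) = Add C (Cmp C h f) (Cmp C h g)) \<and>
     (\<forall>X Y Z f g h. h \<in> hom C X Y \<longrightarrow> f \<in> hom C Y Z \<longrightarrow> g \<in> hom C Y Z \<longrightarrow>
         Cmp C (Add C f g) h = Add C (Cmp C f h) (Cmp C g h))"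
  using pa unfolding is_preadditive_def by (elim conjE) (intro conjI)

lemma distl: "f \<in> hom C X Y \<Longrightarrow> g \<in> hom C X Y \<Longrightarrow> h \<in> hom C Y Z \<Longrightarrow>
         Cmp C h (Add C f g) = Add C (Cmp C h f) (Cmp C h g)"
  using conjunct1[OF pa_dist] by (elim allE impE)

lemma distr: "h \<in> hom C X Y \<Longrightarrow> f \<in> hom C Y Z \<Longrightarrow> g \<in> hom C Y Z \<Longrightarrow>
         Cmp C (Add C f g) h = Add C (Cmp C f h) (Cmp C g h)"
  using conjunct2[OF pa_dist] by (elim allE impE)

lemma zero_add: assumes "f \<in> hom C X Y" shows "Add C (Zer C X Y) f = f"
proof -
  have z: "Zer C X Y \<in> hom C X Y" using hom_ob[OF assms] by blast
  show ?thesis using add_comm[OF z assms] add_zero[OF assms] by simp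
qed

lemma neg_add_self: assumes "f \<in> hom C X Y" shows "Add C (Neg C f) f = Zer C X Y"
  using add_comm[OF neg_hom[OF assms] assms] add_neg[OF assms] by simp

lemma add_cancel_l: assumes "a \<in> hom C X Y" "b \<in> hom C X Y" "c \<in> hom C X Y"
  and e: "Add C a b = Add C a c" shows "b = c"
proof -
  have na: "Neg C a \<in> hom C X Y" using assms(1) by blast
  have "b = Add C (Add C (Neg C a) a) b" using neg_add_self[OF assms(1)] zero_add[OF assms(2)] by simp
  also have "\<dots> = Add C (Neg C a) (Add C a b)" using add_assoc[OF na assms(1,2)] .
  also have "\<dots> = Add C (Neg C a) (Add C a c)" using e by simp
  also have "\<dots> = Add C (Add C (Neg C a) a) c" using add_assoc[OF na assms(1,3)] by simp
  also have "\<dots> = c" using neg_add_self[OF assms(1)] zero_add[OF assms(3)] by simp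
  finally show ?thesis .
qed

lemma idem_zero: assumes "a \<in> hom C X Y" "Add C a a = a" shows "a = Zer C X Y"
proof -
  have z: "Zer C X Y \<in> hom C X Y" using hom_ob[OF assms(1)] by blast
  show ?thesis using add_cancel_l[OF assms(1) assms(1) z] assms(2) add_zero[OF assms(1)] by simp
qed

lemma comp_zero_r: assumes "f \<in> hom C Y Z" "X \<in> Ob C" shows "Cmp C f (Zer C X Y) = Zer C X Z"
proof -
  have z: "Zer C X Y \<in> hom C X Y" using assms hom_ob by blast
  have "Cmp C f (Zer C X Y) = Cmp C f (Add C (Zer C X Y) (Zer C X Y))" using add_zero[OF z] by simp
  also have "\<dots> = Add C (Cmp C f (Zer C X Y)) (Cmp C f (Zer C X Y))" using distl[OF z z assms(1)] .
  finally show ?thesis using idem_zero[OF comp_hom[OF z assms(1)]] by simp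
qed

lemma comp_zero_l: assumes "f \<in> hom C X Y" "Z \<in> Ob C" shows "Cmp C (Zer C Y Z) f = Zer C X Z"
proof -
  have z: "Zer C Y Z \<in> hom C Y Z" using assms hom_ob by blast
  have "Cmp C (Zer C Y Z) f = Cmp C (Add C (Zer C Y Z) (Zer C Y Z)) f" using add_zero[OF z] by simp
  also have "\<dots> = Add C (Cmp C (Zer C Y Z) f) (Cmp C (Zer C Y Z) f)" using distr[OF assms(1) z z] .
  finally show ?thesis using idem_zero[OF comp_hom[OF assms(1) z]] by simp
qed

lemma neg_unique: assumes "a \<in> hom C X Y" "b \<in> hom C X Y" "Add C a b = Zer C X Y"
  shows "b = Neg C a"
  using add_cancel_l[OF assms(1,2) neg_hom[OF assms(1)]] assms(3) add_neg[OF assms(1)] by simp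

lemma comp_neg_r: assumes "f \<in> hom C X Y" "h \<in> hom C Y Z"
  shows "Cmp C h (Neg C f) = Neg C (Cmp C h f)"
proof -
  have X: "X \<in> Ob C" using hom_ob[OF assms(1)] by blast
  have "Add C (Cmp C h f) (Cmp C h (Neg C f)) = Zer C X Z"
    using distl[OF assms(1) neg_hom[OF assms(1)] assms(2)] add_neg[OF assms(1)] comp_zero_r[OF assms(2) X] by simp
  thus ?thesis using neg_unique[OF comp_hom[OF assms] comp_hom[OF neg_hom[OF assms(1)] assms(2)]] by simp
qed

lemma comp_neg_l: assumes "h \<in> hom C X Y" "f \<in> hom C Y Z"
  shows "Cmp C (Neg C f) h = Neg C (Cmp C f h)"
proof -
  have Z: "Z \<in> Ob C" using hom_ob[OF assms(2)] by blast
  have "Add C (Cmp C f h) (Cmp C (Neg C f) h) = Zer C X Z"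
    using distr[OF assms(1) assms(2) neg_hom[OF assms(2)]] add_neg[OF assms(2)] comp_zero_l[OF assms(1) Z] by simp
  thus ?thesis using neg_unique[OF comp_hom[OF assms] comp_hom[OF assms(1) neg_hom[OF assms(2)]]] by simp
qed

lemma neg_neg: assumes "a \<in> hom C X Y" shows "Neg C (Neg C a) = a"
  using neg_unique[OF neg_hom[OF assms] assms neg_add_self[OF assms]] by simp

lemma neg_zero: assumes "X \<in> Ob C" "Y \<in> Ob C" shows "Neg C (Zer C X Y) = Zer C X Y"
proof -
  have z: "Zer C X Y \<in> hom C X Y" using assms by blast
  show ?thesis using neg_unique[OF z z add_zero[OF z]] by simp
qed

lemma sub_eq_zero: assumes "a \<in> hom C X Y" "b \<in> hom C X Y" "Add C a (Neg C b) = Zer C X Y"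
  shows "a = b"
proof -
  have "Add C (Neg C b) a = Zer C X Y" using assms(3) add_comm[OF assms(1) neg_hom[OF assms(2)]] by simp
  from neg_unique[OF neg_hom[OF assms(2)] assms(1) this] show ?thesis using neg_neg[OF assms(2)] by simp
qed

lemma sub_eq: assumes "a \<in> hom C X Y" "b \<in> hom C X Y" "c \<in> hom C X Y"
  shows "(Add C a (Neg C b) = c) \<longleftrightarrow> (a = Add C c b)"
proof
  assume h: "Add C a (Neg C b) = c"
  have "Add C c b = Add C a (Add C (Neg C b) b)" using h add_assoc[OF assms(1) neg_hom[OF assms(2)] assms(2)] by simp
  thus "a = Add C c b" using neg_add_self[OF assms(2)] add_zero[OF assms(1)] by simp
next
  assume h: "a = Add C c b"
  show "Add C a (Neg C b) = c" using h add_assoc[OF assms(3) assms(2) neg_hom[OF assms(2)]]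
     add_neg[OF assms(2)] add_zero[OF assms(3)] by simp
qed

lemma sub_cancel: assumes "p \<in> hom C X Y" "q \<in> hom C X Y"
  shows "Add C (Add C (Add C p q) (Neg C p)) (Neg C q) = Zer C X Y"
proof -
  have "Add C (Add C p q) (Neg C p) = Add C q (Add C p (Neg C p))"
    using add_assoc[OF assms neg_hom[OF assms(1)]] add_comm[OF assms(2) neg_hom[OF assms(1)]]
       add_assoc[OF neg_hom[OF assms(1)] assms(1) assms(2)] add_comm[OF neg_hom[OF assms(1)] assms(1)]
       add_assoc[OF assms(2) assms(1) neg_hom[OF assms(1)]] add_comm[OF assms(1) assms(2)] by simp
  also have "\<dots> = q" using add_neg[OF assms(1)] add_zero[OF assms(2)] by simp
  finally show ?thesis using add_neg[OF assms(2)] by simp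
qed

end


locale ab = pa + assumes ab: "is_abelian C"
begin

lemma kerD: assumes "is_kernel C g k" "g \<in> hom C X Y"
  shows "k \<in> hom C (Dom C k) X" "Cmp C g k = Zer C (Dom C k) Y"
    "\<And>W h. W \<in> Ob C \<Longrightarrow> h \<in> hom C W X \<Longrightarrow> Cmp C g h = Zer C W Y \<Longrightarrow> \<exists>!u. u \<in> hom C W (Dom C k) \<and> Cmp C k u = h"
  using assms unfolding is_kernel_def hom_def by auto

lemma cokerD: assumes "is_cokernel C g c" "g \<in> hom C X Y"
  shows "c \<in> hom C Y (Cod C c)" "Cmp C c g = Zer C X (Cod C c)"
    "\<And>W h. W \<in> Ob C \<Longrightarrow> h \<in> hom C Y W \<Longrightarrow> Cmp C h g = Zer C X W \<Longrightarrow> \<exists>!u. u \<in> hom C (Cod C c) W \<and> Cmp C u c = h"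
  using assms unfolding is_cokernel_def hom_def by auto

lemma ker_ex: assumes "g \<in> hom C X Y" obtains k where "is_kernel C g k"
  using ab assms unfolding is_abelian_def hom_def by blast

lemma coker_ex: assumes "g \<in> hom C X Y" obtains c where "is_cokernel C g c"
  using ab assms unfolding is_abelian_def hom_def by blast

lemma monoD: "is_mono C m \<Longrightarrow> m \<in> hom C M Y \<Longrightarrow> u \<in> hom C W M \<Longrightarrow> v \<in> hom C W M \<Longrightarrow>
   Cmp C m u = Cmp C m v \<Longrightarrow> u = v"
  unfolding is_mono_def using hom_ob by (auto simp: hom_def)

lemma kernel_mono: assumes "is_kernel C g k" "g \<in> hom C X Y" shows "is_mono C k"
proof -
  note K = kerD[OF assms]
  show ?thesis unfolding is_mono_def
  proof (intro conjI ballI impI)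
    show "k \<in> Ar C" using homD[OF K(1)] by blast
    fix W u v assume W: "W \<in> Ob C" and u: "u \<in> hom C W (Dom C k)" and v: "v \<in> hom C W (Dom C k)"
      and e: "Cmp C k u = Cmp C k v"
    have ku: "Cmp C k u \<in> hom C W X" using u K(1) by blast
    have "Cmp C g (Cmp C k u) = Zer C W Y"
      using assoc[OF u K(1) assms(2)] K(2) comp_zero_l[OF u] hom_ob[OF assms(2)] by simp
    from K(3)[OF W ku this] u v e show "u = v" by auto
  qed
qed

lemma mono_comp: assumes "is_mono C m" "is_mono C k" "k \<in> hom C K M" "m \<in> hom C M Y"
  shows "is_mono C (Cmp C m k)"
  unfolding is_mono_def
proof (intro conjI ballI impI)
  show "Cmp C m k \<in> Ar C" using homD[OF comp_hom[OF assms(3,4)]] by blast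
  have d: "Dom C (Cmp C m k) = K" using homD[OF comp_hom[OF assms(3,4)]] by blast
  fix W u v assume W: "W \<in> Ob C" and u: "u \<in> hom C W (Dom C (Cmp C m k))" and v: "v \<in> hom C W (Dom C (Cmp C m k))"
      and e: "Cmp C (Cmp C m k) u = Cmp C (Cmp C m k) v"
  have u': "u \<in> hom C W K" and v': "v \<in> hom C W K" using u v d by auto
  have "Cmp C m (Cmp C k u) = Cmp C m (Cmp C k v)" using e assoc u' v' assms by metis
  hence "Cmp C k u = Cmp C k v" using monoD[OF assms(1,4)] u' v' assms(3) by blast
  thus "u = v" using monoD[OF assms(2,3)] u' v' by blast
qed

lemma extend: assumes h: "h \<in> hom C X Y" and kk: "is_kernel C h \<kappa>"
  and Phi: "\<Phi> \<in> hom C X J" and z: "Cmp C \<Phi> \<kappa> = Zer C (Dom C \<kappa>) J"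
  and inj: "injective_obj C J"
  shows "\<exists>\<psi> \<in> hom C Y J. Cmp C \<psi> h = \<Phi>"
proof -
  have XY: "X \<in> Ob C" "Y \<in> Ob C" using hom_ob[OF h] by auto
  have J: "J \<in> Ob C" using hom_ob[OF Phi] by auto
  note KK = kerD[OF kk h]
  obtain q where cq: "is_cokernel C h q" using coker_ex[OF h] by blast
  note Q = cokerD[OF cq h]
  define Qo where "Qo = Cod C q"
  have q: "q \<in> hom C Y Qo" using Q(1) Qo_def by simp
  have Qo: "Qo \<in> Ob C" using hom_ob[OF q] by simp
  obtain m where km: "is_kernel C q m" using ker_ex[OF q] by blast
  note MM = kerD[OF km q]
  define M where "M = Dom C m"
  have m: "m \<in> hom C M Y" using MM(1) M_def by simp
  have M: "M \<in> Ob C" using hom_ob[OF m] by simp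
  have mmono: "is_mono C m" using kernel_mono[OF km q] .
  have qm: "Cmp C q m = Zer C M Qo" using MM(2) M_def by simp
  have qh: "Cmp C q h = Zer C X Qo" using Q(2) Qo_def by simp
  obtain e where e: "e \<in> hom C X M" and me: "Cmp C m e = h"
    using MM(3)[OF XY(1) h qh] M_def by blast
  have eepi: "is_epi C e" unfolding is_epi_def
  proof (intro conjI ballI impI)
    show "e \<in> Ar C" using homD[OF e] by blast
    have ce: "Cod C e = M" using homD[OF e] by blast
    fix W u v assume W: "W \<in> Ob C" and u0: "u \<in> hom C (Cod C e) W" and v0: "v \<in> hom C (Cod C e) W"
      and uv: "Cmp C u e = Cmp C v e"
    have u: "u \<in> hom C M W" and v: "v \<in> hom C M W" using u0 v0 ce by auto
    define r where "r = Add C u (Neg C v)"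
    have r: "r \<in> hom C M W" using u v r_def by blast
    have re: "Cmp C r e = Zer C X W"
      using distr[OF e u neg_hom[OF v]] comp_neg_l[OF e v] uv add_neg[OF comp_hom[OF e v]] r_def by simp
    obtain k where kk2: "is_kernel C r k" using ker_ex[OF r] by blast
    note K2 = kerD[OF kk2 r]
    define K' where "K' = Dom C k"
    have k: "k \<in> hom C K' M" using K2(1) K'_def by simp
    have K': "K' \<in> Ob C" using hom_ob[OF k] by simp
    have rk: "Cmp C r k = Zer C K' W" using K2(2) K'_def by simp
    obtain e2 where e2: "e2 \<in> hom C X K'" and ke2: "Cmp C k e2 = e"
      using K2(3)[OF XY(1) e re] K'_def by blast
    have mk: "Cmp C m k \<in> hom C K' Y" using k m by blast
    have mkmono: "is_mono C (Cmp C m k)" using mono_comp[OF mmono kernel_mono[OF kk2 r] k m] .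
    then obtain s where sA: "s \<in> Ar C" and ks: "is_kernel C s (Cmp C m k)"
      using ab unfolding is_abelian_def by blast
    define S where "S = Cod C s"
    have sdom: "Dom C s = Y" using ks mk unfolding is_kernel_def hom_def by auto
    have s: "s \<in> hom C Y S" using sA sdom S_def by (simp add: hom_def)
    have S: "S \<in> Ob C" using hom_ob[OF s] by simp
    note SK = kerD[OF ks s]
    have dmk: "Dom C (Cmp C m k) = K'" using homD[OF mk] by blast
    have smk: "Cmp C s (Cmp C m k) = Zer C K' S" using SK(2) dmk by simp
    have "Cmp C s h = Cmp C (Cmp C s (Cmp C m k)) e2"
      using me ke2 assoc[OF e2 k m] assoc[OF e2 mk s] by simp
    hence sh: "Cmp C s h = Zer C X S" using smk comp_zero_l[OF e2 S] by simp
    obtain s' where s': "s' \<in> hom C Qo S" and s'q: "Cmp C s' q = s"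
      using Q(3)[OF S s sh] Qo_def by blast
    have "Cmp C s m = Cmp C s' (Cmp C q m)" using s'q assoc[OF m q s'] by simp
    hence sm: "Cmp C s m = Zer C M S" using qm comp_zero_r[OF s' M] by simp
    obtain j where j: "j \<in> hom C M K'" and mkj: "Cmp C (Cmp C m k) j = m"
      using SK(3)[OF M m sm] dmk by blast
    have "Cmp C m (Cmp C k j) = Cmp C m (Idm C M)"
      using mkj assoc[OF j k m] id_r[OF m] by simp
    hence kj: "Cmp C k j = Idm C M" using monoD[OF mmono m comp_hom[OF j k] id_hom[OF M]] by simp
    have "r = Cmp C r (Cmp C k j)" using kj id_r[OF r] by simp
    also have "\<dots> = Cmp C (Cmp C r k) j" using assoc[OF j k r] .
    also have "\<dots> = Zer C M W" using rk comp_zero_l[OF j W] by simp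
    finally have "r = Zer C M W" .
    thus "u = v" using sub_eq_zero[OF u v] r_def by simp
  qed
  then obtain w where wA: "w \<in> Ar C" and cw: "is_cokernel C w e"
    using ab unfolding is_abelian_def by blast
  define Wo where "Wo = Dom C w"
  have wcod: "Cod C w = X" using cw e unfolding is_cokernel_def hom_def by auto
  have w: "w \<in> hom C Wo X" using wA wcod Wo_def by (simp add: hom_def)
  have Wo: "Wo \<in> Ob C" using hom_ob[OF w] by simp
  note EW = cokerD[OF cw w]
  have ce: "Cod C e = M" using homD[OF e] by blast
  have ew: "Cmp C e w = Zer C Wo M" using EW(2) ce by simp
  have "Cmp C h w = Cmp C m (Cmp C e w)" using me assoc[OF w e m] by simp
  hence hw: "Cmp C h w = Zer C Wo Y" using ew comp_zero_r[OF m Wo] by simp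
  obtain w' where w': "w' \<in> hom C Wo (Dom C \<kappa>)" and kw': "Cmp C \<kappa> w' = w"
    using KK(3)[OF Wo w hw] by blast
  have "Cmp C \<Phi> w = Cmp C (Cmp C \<Phi> \<kappa>) w'" using kw' assoc[OF w' KK(1) Phi] by simp
  hence Pw: "Cmp C \<Phi> w = Zer C Wo J" using z comp_zero_l[OF w' J] by simp
  obtain Psi where Psi: "Psi \<in> hom C M J" and Pe: "Cmp C Psi e = \<Phi>"
    using EW(3)[OF J Phi Pw] ce by auto
  obtain psi where psi: "psi \<in> hom C Y J" and pm: "Cmp C psi m = Psi"
    using inj M XY(2) m Psi mmono unfolding injective_obj_def by blast
  have "Cmp C psi h = \<Phi>" using me pm Pe assoc[OF e m psi] by simp
  thus ?thesis using psi by blast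
qed

end


context ab begin

lemma zero_obj: obtains Z0 where "Z0 \<in> Ob C" "\<And>X. X \<in> Ob C \<Longrightarrow> hom C Z0 X = {Zer C Z0 X}"
  "\<And>X. X \<in> Ob C \<Longrightarrow> hom C X Z0 = {Zer C X Z0}"
proof -
  have "\<exists>Z \<in> Ob C. \<forall>X \<in> Ob C. hom C Z X = {Zer C Z X} \<and> hom C X Z = {Zer C X Z}"
    using ab unfolding is_abelian_def by (elim conjE)
  then obtain Z0 where "Z0 \<in> Ob C" "\<forall>X \<in> Ob C. hom C Z0 X = {Zer C Z0 X} \<and> hom C X Z0 = {Zer C X Z0}"
    by (elim bexE)
  thus ?thesis using that by blast
qed

lemma monoM:
  assumes mA: "mono_A C (A,B,Cc,f1,g1) (A',B',C',f2,g2) (a,b,c)"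
    and X: "cxA C (A,B,Cc,f1,g1)" and Y: "cxA C (A',B',C',f2,g2)"
    and W: "W \<in> Ob C" and x: "x \<in> hom C W Cc" and y: "y \<in> hom C W B'"
    and cx: "Cmp C c x = Cmp C g2 y"
  shows "\<exists>z \<in> hom C W B. x = Cmp C g1 z"
proof -
  obtain Z0 where Z0: "Z0 \<in> Ob C" and Zs: "\<And>X. X \<in> Ob C \<Longrightarrow> hom C Z0 X = {Zer C Z0 X}"
    and Zt: "\<And>X. X \<in> Ob C \<Longrightarrow> hom C X Z0 = {Zer C X Z0}" by (rule zero_obj) blast
  have eqZ: "\<And>p q X'. p \<in> hom C Z0 X' \<Longrightarrow> q \<in> hom C Z0 X' \<Longrightarrow> p = q"
  proof -
    fix p q X' assume a: "p \<in> hom C Z0 X'" "q \<in> hom C Z0 X'"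
    have "hom C Z0 X' = {Zer C Z0 X'}" using Zs[OF conjunct2[OF hom_ob[OF a(1)]]] .
    thus "p = q" using a by simp
  qed
  have ch: "chain_map C (A,B,Cc,f1,g1) (A',B',C',f2,g2) (a,b,c)" using mA unfolding mono_A_def by blast
  hence a: "a \<in> hom C A A'" and b: "b \<in> hom C B B'" and c: "c \<in> hom C Cc C'"
    unfolding chain_map_def by auto
  have f1: "f1 \<in> hom C A B" and g1: "g1 \<in> hom C B Cc" using X unfolding cxA_def by auto
  have f2: "f2 \<in> hom C A' B'" and g2: "g2 \<in> hom C B' C'" using Y unfolding cxA_def by auto
  have obs: "A \<in> Ob C" "B \<in> Ob C" "Cc \<in> Ob C" "A' \<in> Ob C" "B' \<in> Ob C" "C' \<in> Ob C"
    using hom_ob a b c by auto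
  define Z where "Z = (Z0, Z0, W, Zer C Z0 Z0, Zer C Z0 W)"
  have zz: "Zer C Z0 Z0 \<in> hom C Z0 Z0" "Zer C Z0 W \<in> hom C Z0 W" using Z0 W by auto
  have cxZ: "cxA C Z"
  proof -
  have zc: "Cmp C (Zer C Z0 W) (Zer C Z0 Z0) = Zer C Z0 W"
    by (rule eqZ[of _ W], rule comp_hom[OF zz(1) zz(2)], fact zz(2))
  show "cxA C Z" unfolding Z_def cxA_def
  proof (simp, intro conjI)
    show "Z0 \<in> Ob C" "W \<in> Ob C" by (fact Z0, fact W)
    show "Zer C Z0 Z0 \<in> hom C Z0 Z0" "Zer C Z0 W \<in> hom C Z0 W" by (fact zz(1), fact zz(2))
    show "Cmp C (Zer C Z0 W) (Zer C Z0 Z0) = Zer C Z0 W" by (fact zc)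
    show "is_mono C (Zer C Z0 Z0)" unfolding is_mono_def
      using zz(1) Zt Z0 by (auto simp: hom_def)
    show "is_kernel C (Zer C Z0 W) (Zer C Z0 Z0)" unfolding is_kernel_def
    proof (intro conjI ballI impI)
      show "Zer C Z0 W \<in> Ar C" using homD[OF zz(2)] by blast
      have d1: "Dom C (Zer C Z0 Z0) = Z0" "Dom C (Zer C Z0 W) = Z0" "Cod C (Zer C Z0 W) = W"
        using homD[OF zz(1)] homD[OF zz(2)] by auto
      show "Zer C Z0 Z0 \<in> hom C (Dom C (Zer C Z0 Z0)) (Dom C (Zer C Z0 W))" using d1 zz by simp
      show "Cmp C (Zer C Z0 W) (Zer C Z0 Z0) = Zer C (Dom C (Zer C Z0 Z0)) (Cod C (Zer C Z0 W))"
        using d1 zc by simp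
      fix W' h assume W': "W' \<in> Ob C" and h: "h \<in> hom C W' (Dom C (Zer C Z0 W))"
      have h': "h \<in> hom C W' Z0" using h d1 by simp
      have hz: "hom C W' Z0 = {Zer C W' Z0}" using Zt W' by simp
      show "\<exists>!u. u \<in> hom C W' (Dom C (Zer C Z0 Z0)) \<and> Cmp C (Zer C Z0 Z0) u = h"
      proof
        show "Zer C W' Z0 \<in> hom C W' (Dom C (Zer C Z0 Z0)) \<and> Cmp C (Zer C Z0 Z0) (Zer C W' Z0) = h"
          using d1 hz h' comp_hom[OF _ zz(1), of "Zer C W' Z0" W'] by auto
        show "\<And>u. u \<in> hom C W' (Dom C (Zer C Z0 Z0)) \<and> Cmp C (Zer C Z0 Z0) u = h \<Longrightarrow> u = Zer C W' Z0"
          using d1 hz by auto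
      qed
    qed
  qed
  qed
  define v where "v = (Zer C Z0 A, Zer C Z0 B, x)"
  define w where "w = (Zer C Z0 A, Zer C Z0 B, Zer C W Cc)"
  have zA: "Zer C Z0 A \<in> hom C Z0 A" and zB: "Zer C Z0 B \<in> hom C Z0 B" and zWC: "Zer C W Cc \<in> hom C W Cc"
    using Z0 W obs by auto
  have chv: "chain_map C Z (A,B,Cc,f1,g1) v" unfolding chain_map_def Z_def v_def
    apply (simp add: zA zB x)
    apply (intro conjI; rule eqZ)
    using zA zB zz x f1 g1 by blast+
  have chw: "chain_map C Z (A,B,Cc,f1,g1) w" unfolding chain_map_def Z_def w_def
    apply (simp add: zA zB zWC)
    apply (intro conjI; rule eqZ)
    using zA zB zz zWC f1 g1 by blast+
  have czero: "Cmp C c (Zer C W Cc) = Zer C W C'" using comp_zero_r[OF c W] .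
  have cxh: "Cmp C c x \<in> hom C W C'" using c x by blast
  have ch1: "chain_map C Z (A', B', C', f2, g2) (cmp3 C (a, b, c) v)"
      unfolding chain_map_def Z_def v_def cmp3_def
      apply simp apply (intro conjI)
      using zA zB a b c x apply blast+
      apply (rule eqZ) using zA zB a b c x f2 zz apply blast+
      apply (rule eqZ) using zA zB a b c x g2 zz apply blast+
      done
  have ch2: "chain_map C Z (A', B', C', f2, g2) (cmp3 C (a, b, c) w)"
      unfolding chain_map_def Z_def w_def cmp3_def
      apply simp apply (intro conjI)
      using zA zB a b c zWC apply blast+
      apply (rule eqZ) using zA zB a b c zWC f2 zz apply blast+
      apply (rule eqZ) using zA zB a b c zWC g2 zz apply blast+
      done
  have zA': "Zer C Z0 A' \<in> hom C Z0 A'" using Z0 obs by blast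
  have m1: "Cmp C a (Zer C Z0 A) \<in> hom C Z0 A'" using comp_hom[OF zA a] .
  have m2: "Cmp C b (Zer C Z0 B) \<in> hom C Z0 B'" using comp_hom[OF zB b] .
  have third: "\<exists>s t. s \<in> hom C Z0 A' \<and> t \<in> hom C W B' \<and>
     Add C (Cmp C a (Zer C Z0 A)) (Neg C (Cmp C a (Zer C Z0 A))) = Cmp C s (Zer C Z0 Z0) \<and>
     Add C (Cmp C b (Zer C Z0 B)) (Neg C (Cmp C b (Zer C Z0 B))) = Add C (Cmp C f2 s) (Cmp C t (Zer C Z0 W)) \<and>
     Add C (Cmp C c x) (Neg C (Cmp C c (Zer C W Cc))) = Cmp C g2 t"
  proof (intro exI conjI)
    show "Zer C Z0 A' \<in> hom C Z0 A'" by (fact zA')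
    show "y \<in> hom C W B'" by (fact y)
    show "Add C (Cmp C a (Zer C Z0 A)) (Neg C (Cmp C a (Zer C Z0 A))) = Cmp C (Zer C Z0 A') (Zer C Z0 Z0)"
      by (rule eqZ[OF add_hom[OF m1 neg_hom[OF m1]] comp_hom[OF zz(1) zA']])
    show "Add C (Cmp C b (Zer C Z0 B)) (Neg C (Cmp C b (Zer C Z0 B))) = Add C (Cmp C f2 (Zer C Z0 A')) (Cmp C y (Zer C Z0 W))"
      by (rule eqZ[OF add_hom[OF m2 neg_hom[OF m2]] add_hom[OF comp_hom[OF zA' f2] comp_hom[OF zz(2) y]]])
    show "Add C (Cmp C c x) (Neg C (Cmp C c (Zer C W Cc))) = Cmp C g2 y"
      using czero neg_zero[OF W obs(6)] add_zero[OF cxh] cx by simp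
  qed
  have hom_uv: "homotopic C Z (A',B',C',f2,g2) (cmp3 C (a,b,c) v) (cmp3 C (a,b,c) w)"
    unfolding homotopic_def using ch1 ch2 third by (simp add: Z_def v_def w_def cmp3_def)
  have "homotopic C Z (A,B,Cc,f1,g1) v w" using mA cxZ chv chw hom_uv unfolding mono_A_def by blast
  then obtain t where t: "t \<in> hom C W B" and e: "Add C x (Neg C (Zer C W Cc)) = Cmp C g1 t"
    unfolding homotopic_def Z_def v_def w_def by auto
  have "x = Cmp C g1 t" using e neg_zero[OF W obs(3)] add_zero[OF x] by simp
  thus ?thesis using t by blast
qed

end


context ab begin

lemma main:
  assumes E: "cxA C (D,I,J,d,e)" and injI: "injective_obj C I" and injJ: "injective_obj C J"
    and X: "cxA C (A,B,Cc,f1,g1)" and Y: "cxA C (A',B',C',f2,g2)"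
    and mA: "mono_A C (A,B,Cc,f1,g1) (A',B',C',f2,g2) (a,b,c)"
    and ph: "chain_map C (A,B,Cc,f1,g1) (D,I,J,d,e) (\<phi>0,\<phi>1,\<phi>2)"
  shows "\<exists>\<psi>. chain_map C (A',B',C',f2,g2) (D,I,J,d,e) \<psi> \<and>
     homotopic C (A,B,Cc,f1,g1) (D,I,J,d,e) (cmp3 C \<psi> (a,b,c)) (\<phi>0,\<phi>1,\<phi>2)"
proof -
  have ch: "chain_map C (A,B,Cc,f1,g1) (A',B',C',f2,g2) (a,b,c)" using mA unfolding mono_A_def by blast
  hence a: "a \<in> hom C A A'" and b: "b \<in> hom C B B'" and c: "c \<in> hom C Cc C'"
    and bf: "Cmp C b f1 = Cmp C f2 a" and cg: "Cmp C c g1 = Cmp C g2 b"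
    unfolding chain_map_def by auto
  have f1: "f1 \<in> hom C A B" and g1: "g1 \<in> hom C B Cc" and gf1: "Cmp C g1 f1 = Zer C A Cc"
    using X unfolding cxA_def by auto
  have f2: "f2 \<in> hom C A' B'" and g2: "g2 \<in> hom C B' C'" and gf2: "Cmp C g2 f2 = Zer C A' C'"
    using Y unfolding cxA_def by auto
  have d: "d \<in> hom C D I" and e: "e \<in> hom C I J" and dmono: "is_mono C d" and dker: "is_kernel C e d"
    using E unfolding cxA_def by auto
  have p0: "\<phi>0 \<in> hom C A D" and p1: "\<phi>1 \<in> hom C B I" and p2: "\<phi>2 \<in> hom C Cc J"
    and pf: "Cmp C \<phi>1 f1 = Cmp C d \<phi>0" and pg: "Cmp C \<phi>2 g1 = Cmp C e \<phi>1"
    using ph unfolding chain_map_def by auto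
  have obs: "A \<in> Ob C" "B \<in> Ob C" "Cc \<in> Ob C" "A' \<in> Ob C" "B' \<in> Ob C" "C' \<in> Ob C"
      "D \<in> Ob C" "I \<in> Ob C" "J \<in> Ob C"
    using hom_ob a b c d e by auto
  obtain P i1 i2 q1 q2 where P: "P \<in> Ob C" and i1: "i1 \<in> hom C Cc P" and i2: "i2 \<in> hom C B' P"
    and q1: "q1 \<in> hom C P Cc" and q2: "q2 \<in> hom C P B'"
    and qi1: "Cmp C q1 i1 = Idm C Cc" and qi2: "Cmp C q2 i2 = Idm C B'"
    and qi12: "Cmp C q1 i2 = Zer C B' Cc" and qi21: "Cmp C q2 i1 = Zer C Cc B'"
    and sumid: "Add C (Cmp C i1 q1) (Cmp C i2 q2) = Idm C P"
  proof -
    have "\<forall>X \<in> Ob C. \<forall>Y \<in> Ob C. \<exists>P \<in> Ob C. \<exists>i1 i2 p1 p2.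
        i1 \<in> hom C X P \<and> i2 \<in> hom C Y P \<and> p1 \<in> hom C P X \<and> p2 \<in> hom C P Y \<and>
        Cmp C p1 i1 = Idm C X \<and> Cmp C p2 i2 = Idm C Y \<and>
        Cmp C p1 i2 = Zer C Y X \<and> Cmp C p2 i1 = Zer C X Y \<and>
        Add C (Cmp C i1 p1) (Cmp C i2 p2) = Idm C P"
      using ab unfolding is_abelian_def by (elim conjE)
    hence "\<exists>P \<in> Ob C. \<exists>i1 i2 p1 p2.
        i1 \<in> hom C Cc P \<and> i2 \<in> hom C B' P \<and> p1 \<in> hom C P Cc \<and> p2 \<in> hom C P B' \<and>
        Cmp C p1 i1 = Idm C Cc \<and> Cmp C p2 i2 = Idm C B' \<and>
        Cmp C p1 i2 = Zer C B' Cc \<and> Cmp C p2 i1 = Zer C Cc B' \<and>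
        Add C (Cmp C i1 p1) (Cmp C i2 p2) = Idm C P" using obs(3,5) by blast
    thus ?thesis using that by blast
  qed
  define h where "h = Add C (Cmp C c q1) (Cmp C g2 q2)"
  have h: "h \<in> hom C P C'" unfolding h_def using c q1 g2 q2 by blast
  obtain \<kappa> where kk: "is_kernel C h \<kappa>" using ker_ex[OF h] by blast
  note KK = kerD[OF kk h]
  define K where "K = Dom C \<kappa>"
  have k: "\<kappa> \<in> hom C K P" using KK(1) K_def by simp
  have K: "K \<in> Ob C" using hom_ob[OF k] by simp
  have hk: "Cmp C h \<kappa> = Zer C K C'" using KK(2) K_def by simp
  define x where "x = Cmp C q1 \<kappa>"
  define y where "y = Cmp C q2 \<kappa>"
  have x: "x \<in> hom C K Cc" and y: "y \<in> hom C K B'" using x_def y_def k q1 q2 by auto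
  have "Cmp C h \<kappa> = Add C (Cmp C c x) (Cmp C g2 y)"
    unfolding h_def x_def y_def using distr[OF k comp_hom[OF q1 c] comp_hom[OF q2 g2]] assoc[OF k q1 c] assoc[OF k q2 g2] by simp
  hence "Add C (Cmp C g2 y) (Cmp C c x) = Zer C K C'" using hk add_comm[OF comp_hom[OF x c] comp_hom[OF y g2]] by simp
  hence "Cmp C c x = Neg C (Cmp C g2 y)" using neg_unique[OF comp_hom[OF y g2] comp_hom[OF x c]] by simp
  hence cx: "Cmp C c x = Cmp C g2 (Neg C y)" using comp_neg_r[OF y g2] by simp
  obtain z where z: "z \<in> hom C K B" and xz: "x = Cmp C g1 z"
    using monoM[OF mA X Y K x neg_hom[OF y] cx] by blast
  have kmono: "is_mono C \<kappa>" using kernel_mono[OF kk h] .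
  have nz: "Neg C (Cmp C \<phi>1 z) \<in> hom C K I" using p1 z by blast
  obtain \<chi> where chi: "\<chi> \<in> hom C P I" and chik: "Cmp C \<chi> \<kappa> = Neg C (Cmp C \<phi>1 z)"
    using injI K P k nz kmono unfolding injective_obj_def by blast
  define \<Phi> where "\<Phi> = Add C (Cmp C \<phi>2 q1) (Cmp C e \<chi>)"
  have Phi: "\<Phi> \<in> hom C P J" unfolding \<Phi>_def using p2 q1 e chi by blast
  have "Cmp C \<Phi> \<kappa> = Add C (Cmp C \<phi>2 x) (Cmp C e (Cmp C \<chi> \<kappa>))"
    unfolding \<Phi>_def x_def using distr[OF k comp_hom[OF q1 p2] comp_hom[OF chi e]] assoc[OF k q1 p2] assoc[OF k chi e] by simp
  also have "\<dots> = Add C (Cmp C e (Cmp C \<phi>1 z)) (Neg C (Cmp C e (Cmp C \<phi>1 z)))"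
    using chik xz assoc[OF z g1 p2] pg assoc[OF z p1 e] comp_neg_r[OF comp_hom[OF z p1] e] by simp
  also have "\<dots> = Zer C K J" using add_neg[OF comp_hom[OF comp_hom[OF z p1] e]] by simp
  finally have PK: "Cmp C \<Phi> \<kappa> = Zer C (Dom C \<kappa>) J" using K_def by simp
  obtain \<psi>2 where psi2: "\<psi>2 \<in> hom C C' J" and ph2: "Cmp C \<psi>2 h = \<Phi>"
    using extend[OF h kk Phi PK injJ] by blast
  define t where "t = Cmp C \<chi> i1"
  define \<psi>1 where "\<psi>1 = Cmp C \<chi> i2"
  have t: "t \<in> hom C Cc I" and psi1: "\<psi>1 \<in> hom C B' I" using t_def \<psi>1_def chi i1 i2 by auto
  have hi1: "Cmp C h i1 = c"
    unfolding h_def using distr[OF i1 comp_hom[OF q1 c] comp_hom[OF q2 g2]] assoc[OF i1 q1 c, symmetric] assoc[OF i1 q2 g2, symmetric] qi1 qi21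
      id_r[OF c] comp_zero_r[OF g2 obs(3)] add_zero[OF c] by simp
  have hi2: "Cmp C h i2 = g2"
    unfolding h_def using distr[OF i2 comp_hom[OF q1 c] comp_hom[OF q2 g2]] assoc[OF i2 q1 c, symmetric] assoc[OF i2 q2 g2, symmetric] qi2 qi12
      id_r[OF g2] comp_zero_r[OF c obs(5)] zero_add[OF g2] by simp
  have Pi1: "Cmp C \<Phi> i1 = Add C \<phi>2 (Cmp C e t)"
    unfolding \<Phi>_def t_def using distr[OF i1 comp_hom[OF q1 p2] comp_hom[OF chi e]] assoc[OF i1 q1 p2, symmetric] assoc[OF i1 chi e, symmetric] qi1 id_r[OF p2] by simp
  have Pi2: "Cmp C \<Phi> i2 = Cmp C e \<psi>1"
    unfolding \<Phi>_def \<psi>1_def using distr[OF i2 comp_hom[OF q1 p2] comp_hom[OF chi e]] assoc[OF i2 q1 p2, symmetric] assoc[OF i2 chi e, symmetric] qi12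
      comp_zero_r[OF p2 obs(5)] zero_add[OF comp_hom[OF comp_hom[OF i2 chi] e]] by simp
  have psc: "Cmp C \<psi>2 c = Add C \<phi>2 (Cmp C e t)" using hi1 ph2 Pi1 assoc[OF i1 h psi2] by simp
  have psg: "Cmp C \<psi>2 g2 = Cmp C e \<psi>1" using hi2 ph2 Pi2 assoc[OF i2 h psi2] by simp
  note DK = kerD[OF dker e]
  have dD: "Dom C d = D" using homD[OF d] by blast
  have "Cmp C e (Cmp C \<psi>1 f2) = Zer C A' J"
    using assoc[OF f2 psi1 e] psg assoc[OF f2 g2 psi2] gf2 comp_zero_r[OF psi2 obs(4)] by simp
  then obtain \<psi>0 where psi0: "\<psi>0 \<in> hom C A' D" and dpsi0: "Cmp C d \<psi>0 = Cmp C \<psi>1 f2"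
    using DK(3)[OF obs(4) comp_hom[OF f2 psi1]] dD by blast
  define \<rho> where "\<rho> = Add C (Add C (Cmp C \<psi>1 b) (Neg C \<phi>1)) (Neg C (Cmp C t g1))"
  have tg: "Cmp C t g1 \<in> hom C B I" using t g1 by blast
  have pb: "Cmp C \<psi>1 b \<in> hom C B I" using psi1 b by blast
  have rho: "\<rho> \<in> hom C B I" unfolding \<rho>_def using tg pb p1 by blast
  have "Cmp C e (Cmp C \<psi>1 b) = Add C (Cmp C \<phi>2 g1) (Cmp C e (Cmp C t g1))"
    using assoc[OF b psi1 e] psg[symmetric] assoc[OF b g2 psi2, symmetric] cg[symmetric] assoc[OF g1 c psi2] psc
      distr[OF g1 p2 comp_hom[OF t e]] assoc[OF g1 t e] by simp
  hence "Cmp C e \<rho> = Add C (Add C (Add C (Cmp C \<phi>2 g1) (Cmp C e (Cmp C t g1))) (Neg C (Cmp C \<phi>2 g1)))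
        (Neg C (Cmp C e (Cmp C t g1)))"
    unfolding \<rho>_def using distl[OF add_hom[OF pb neg_hom[OF p1]] neg_hom[OF tg] e] distl[OF pb neg_hom[OF p1] e]
      comp_neg_r[OF p1 e] comp_neg_r[OF tg e] pg[symmetric] by simp
  also have "\<dots> = Zer C B J" using sub_cancel[OF comp_hom[OF g1 p2] comp_hom[OF tg e]] by simp
  finally obtain s where s: "s \<in> hom C B D" and ds: "Cmp C d s = \<rho>"
    using DK(3)[OF obs(2) rho] dD by blast
  define \<psi> where "\<psi> = (\<psi>0, \<psi>1, \<psi>2)"
  have chpsi: "chain_map C (A',B',C',f2,g2) (D,I,J,d,e) \<psi>"
    unfolding chain_map_def \<psi>_def using psi0 psi1 psi2 dpsi0 psg by simp
  have H1: "Add C (Cmp C \<psi>1 b) (Neg C \<phi>1) = Add C (Cmp C d s) (Cmp C t g1)"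
    using sub_eq[OF add_hom[OF pb neg_hom[OF p1]] tg rho] ds \<rho>_def by simp
  have H2: "Add C (Cmp C \<psi>2 c) (Neg C \<phi>2) = Cmp C e t"
    using sub_eq[OF comp_hom[OF c psi2] p2 comp_hom[OF t e]] psc add_comm[OF p2 comp_hom[OF t e]] by simp
  have H0: "Add C (Cmp C \<psi>0 a) (Neg C \<phi>0) = Cmp C s f1"
  proof (rule monoD[OF dmono d])
    show "Add C (Cmp C \<psi>0 a) (Neg C \<phi>0) \<in> hom C A D" using psi0 a p0 by blast
    show "Cmp C s f1 \<in> hom C A D" using s f1 by blast
    have "Cmp C d (Add C (Cmp C \<psi>0 a) (Neg C \<phi>0)) = Add C (Cmp C (Cmp C \<psi>1 b) f1) (Neg C (Cmp C \<phi>1 f1))"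
      using distl[OF comp_hom[OF a psi0] neg_hom[OF p0] d] comp_neg_r[OF p0 d] pf[symmetric]
        assoc[OF a psi0 d] dpsi0 assoc[OF a f2 psi1, symmetric] bf[symmetric] assoc[OF f1 b psi1] by simp
    also have "\<dots> = Cmp C \<rho> f1"
      unfolding \<rho>_def using distr[OF f1 add_hom[OF pb neg_hom[OF p1]] neg_hom[OF tg]] distr[OF f1 pb neg_hom[OF p1]]
        comp_neg_l[OF f1 p1] comp_neg_l[OF f1 tg] assoc[OF f1 g1 t, symmetric] gf1
        comp_zero_r[OF t obs(1)] neg_zero[OF obs(1) obs(8)]
        add_zero[OF add_hom[OF comp_hom[OF f1 pb] neg_hom[OF comp_hom[OF f1 p1]]]]
      by simp
    also have "\<dots> = Cmp C d (Cmp C s f1)" using ds assoc[OF f1 s d] by simp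
    finally show "Cmp C d (Add C (Cmp C \<psi>0 a) (Neg C \<phi>0)) = Cmp C d (Cmp C s f1)" .
  qed
  have chc: "chain_map C (A,B,Cc,f1,g1) (D,I,J,d,e) (cmp3 C \<psi> (a,b,c))"
    unfolding chain_map_def \<psi>_def cmp3_def
    using psi0 psi1 psi2 a b c assoc[OF f1 b psi1] bf assoc[OF a f2 psi1] dpsi0 assoc[OF a psi0 d]
      assoc[OF g1 c psi2] cg assoc[OF b g2 psi2] psg assoc[OF b psi1 e] by auto
  have "homotopic C (A,B,Cc,f1,g1) (D,I,J,d,e) (cmp3 C \<psi> (a,b,c)) (\<phi>0,\<phi>1,\<phi>2)"
    unfolding homotopic_def using chc ph H0 H1 H2 s t
    by (simp add: \<psi>_def cmp3_def) blast
  thus ?thesis using chpsi by blast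
qed

end
theorem proposition3p2:
  fixes C :: "('o, 'm) addcat"
    and D I J :: 'o and f g :: 'm
  assumes "is_abelian C"
    and "cxA C (D, I, J, f, g)"
    and "injective_obj C I"
    and "injective_obj C J"
  shows "injective_A C (D, I, J, f, g)"
proof -
  have pre: "is_preadditive C" using assms(1) unfolding is_abelian_def by (rule conjunct1)
  interpret ab C
  proof unfold_locales
    show "is_preadditive C" by (fact pre)
    show "is_abelian C" by (fact assms(1))
  qed
  show ?thesis unfolding injective_A_def
  proof (intro conjI allI impI)
    show "cxA C (D, I, J, f, g)" by (fact assms(2))
    fix X Y u \<phi>
    assume X: "cxA C X" and Y: "cxA C Y" and m: "mono_A C X Y u" and ph: "chain_map C X (D, I, J, f, g) \<phi>"
    obtain A B Cc f1 g1 where Xe: "X = (A,B,Cc,f1,g1)" by (cases X) auto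
    obtain A' B' C' f2 g2 where Ye: "Y = (A',B',C',f2,g2)" by (cases Y) auto
    obtain a b c where ue: "u = (a,b,c)" by (cases u) auto
    obtain p0 p1 p2 where pe: "\<phi> = (p0,p1,p2)" by (cases \<phi>) auto
    show "\<exists>\<psi>. chain_map C Y (D, I, J, f, g) \<psi> \<and> homotopic C X (D, I, J, f, g) (cmp3 C \<psi> u) \<phi>"
      unfolding Xe Ye ue pe
      by (rule main[OF assms(2,3,4) X[unfolded Xe] Y[unfolded Ye] m[unfolded Xe Ye ue] ph[unfolded Xe pe]])
  qed
qed

end
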